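(* For $0<\varepsilon\le1$ and $z\in\mathbf{C}\setminus\mathbf{R}$ let $S_\varepsilon(z)=\sum_{n\in\mathbf{Z}}\frac{1}{(z+n)^2|z+n|^{2\varepsilon}}$. Fix $y_0>0$. Then there is a constant $C>0$ depending only on $y_0$ such that for all $z$ with $y=\mathrm{Im}(z)$ satisfying $|y|\ge y_0$ and all $0<\varepsilon\le1$, \[|S_\varepsilon(z)|\le C\left(\frac{1}{\Gamma(\varepsilon)|y|^{1+2\varepsilon}}+e^{-2\pi|y|}\right),\] where $\Gamma(s)=\int_0^\infty e^{-t}t^{s-1}dt$. *)

theory Defs
  imports "HOL-Analysis.Analysis"
begin

definition S_eps :: "real \<Rightarrow> complex \<Rightarrow> complex" where
  "S_eps \<epsilon> z = (\<Sum>\<^sub>\<infinity> n::int. 1 / ((z + of_int n)^2 * of_real (cmod (z + of_int n) powr (2 * \<epsilon>))))"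

end

theory Submission
  imports Defs
begin

lemma digamma_refl:
  fixes z :: complex assumes z: "z \<notin> \<int>"
  shows "Digamma z - Digamma (1 - z) = - of_real pi * cos (of_real pi * z) / sin (of_real pi * z)"
proof -
  have z1: "z \<notin> \<int>\<^sub>\<le>\<^sub>0" using z nonpos_Ints_subset_Ints by blast
  have z2: "1 - z \<notin> \<int>\<^sub>\<le>\<^sub>0"
  proof
    assume "1 - z \<in> \<int>\<^sub>\<le>\<^sub>0" hence "1 - z \<in> \<int>" using nonpos_Ints_subset_Ints by blast
    hence "1 - (1 - z) \<in> \<int>" by (intro Ints_diff) auto
    thus False using z by simp
  qed
  have s: "sin (of_real pi * z) \<noteq> 0"
  proof
    assume "sin (of_real pi * z) = 0"
    then obtain n :: int where "of_real pi * z = of_real (of_int n * pi)" using sin_eq_0 by blast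
    hence "of_real pi * z = of_real pi * (of_int n :: complex)" by simp
    hence "z = of_int n" by simp
    thus False using z by simp
  qed
  have eq: "(\<lambda>w::complex. Gamma w * Gamma (1 - w)) = (\<lambda>w::complex. of_real pi / sin (of_real pi * w))"
    using Gamma_reflection_complex by (intro ext) blast
  have d1: "((\<lambda>w. Gamma w * Gamma (1 - w)) has_field_derivative
      (Gamma z * Digamma z * Gamma (1 - z) + Gamma z * (Gamma (1 - z) * Digamma (1 - z) * (-1)))) (at z)"
  proof -
    have g1: "((\<lambda>w. Gamma (1 - w)) has_field_derivative Gamma (1 - z) * Digamma (1 - z) * (-1)) (at z)"
    proof -
      have "((\<lambda>w::complex. 1 - w) has_field_derivative -1) (at z)" by (auto intro!: derivative_eq_intros)
      from DERIV_chain2[OF has_field_derivative_Gamma[OF z2, of UNIV] this] show ?thesis by simp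
    qed
    show ?thesis using DERIV_mult[OF has_field_derivative_Gamma[OF z1, of UNIV] g1] by (simp add: algebra_simps)
  qed
  have d2: "((\<lambda>w. of_real pi / sin (of_real pi * w)) has_field_derivative
      (- (of_real pi * (cos (of_real pi * z) * of_real pi)) / (sin (of_real pi * z))^2)) (at z)"
    using s by (auto intro!: derivative_eq_intros simp: power2_eq_square)
  have "Gamma z * Digamma z * Gamma (1 - z) + Gamma z * (Gamma (1 - z) * Digamma (1 - z) * (-1))
       = - (of_real pi * (cos (of_real pi * z) * of_real pi)) / (sin (of_real pi * z))^2"
    using d1 d2 unfolding eq by (rule DERIV_unique)
  hence "(Gamma z * Gamma (1 - z)) * (Digamma z - Digamma (1 - z))
       = (of_real pi / sin (of_real pi * z)) * (- of_real pi * cos (of_real pi * z) / sin (of_real pi * z))"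
    using s by (simp add: algebra_simps power2_eq_square)
  hence "(of_real pi / sin (of_real pi * z)) * (Digamma z - Digamma (1 - z))
       = (of_real pi / sin (of_real pi * z)) * (- of_real pi * cos (of_real pi * z) / sin (of_real pi * z))"
    using Gamma_reflection_complex[of z] by simp
  moreover have "of_real pi / sin (of_real pi * z) \<noteq> 0" using s by simp
  ultimately show ?thesis by (metis mult_left_cancel)
qed

lemma trigamma_refl:
  fixes z :: complex assumes z: "z \<notin> \<int>"
  shows "Polygamma 1 z + Polygamma 1 (1 - z) = (of_real pi)^2 / (sin (of_real pi * z))^2"
proof -
  have z1: "z \<notin> \<int>\<^sub>\<le>\<^sub>0" using z nonpos_Ints_subset_Ints by blast
  have z2: "1 - z \<notin> \<int>\<^sub>\<le>\<^sub>0"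
  proof
    assume "1 - z \<in> \<int>\<^sub>\<le>\<^sub>0" hence "1 - z \<in> \<int>" using nonpos_Ints_subset_Ints by blast
    hence "1 - (1 - z) \<in> \<int>" by (intro Ints_diff) auto
    thus False using z by simp
  qed
  have s: "sin (of_real pi * z) \<noteq> 0"
  proof
    assume "sin (of_real pi * z) = 0"
    then obtain n :: int where "of_real pi * z = of_real (of_int n * pi)" using sin_eq_0 by blast
    hence "of_real pi * z = of_real pi * (of_int n :: complex)" by simp
    hence "z = of_int n" by simp
    thus False using z by simp
  qed
  have d1: "((\<lambda>w. Digamma w - Digamma (1 - w)) has_field_derivative
      (Polygamma 1 z - Polygamma 1 (1 - z) * (-1))) (at z)"
  proof -
    have g1: "((\<lambda>w. Digamma (1 - w)) has_field_derivative Polygamma 1 (1 - z) * (-1)) (at z)"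
    proof -
      have "((\<lambda>w::complex. 1 - w) has_field_derivative -1) (at z)" by (auto intro!: derivative_eq_intros)
      from DERIV_chain2[OF has_field_derivative_Polygamma[OF z2, of 0 UNIV] this] show ?thesis by (simp add: numeral_eq_Suc)
    qed
    show ?thesis using DERIV_diff[OF has_field_derivative_Polygamma[OF z1, of 0 UNIV] g1] by (simp add: numeral_eq_Suc)
  qed
  have d2: "((\<lambda>w. - of_real pi * cos (of_real pi * w) / sin (of_real pi * w)) has_field_derivative
      ((of_real pi)^2 / (sin (of_real pi * z))^2)) (at z)"
    using s by (auto intro!: derivative_eq_intros simp: field_simps power2_eq_square)
      (insert sin_cos_squared_add[of "z * complex_of_real pi"], algebra)
  have "open (- \<int> :: complex set)" by (simp add: open_Compl)
  have d3: "((\<lambda>w. Digamma w - Digamma (1 - w)) has_field_derivative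
      ((of_real pi)^2 / (sin (of_real pi * z))^2)) (at z)"
    by (rule has_field_derivative_transform_within_open[OF d2 \<open>open _\<close>]) (use z digamma_refl in auto)
  have "Polygamma 1 z - Polygamma 1 (1 - z) * (-1) = (of_real pi)^2 / (sin (of_real pi * z))^2"
    using d1 d3 by (rule DERIV_unique)
  thus ?thesis by simp
qed

lemma int_sum_bound:
  fixes F :: "real \<Rightarrow> real" and x B :: real
  assumes nn: "\<And>s. 0 \<le> s \<Longrightarrow> 0 \<le> F s"
    and mono: "\<And>s t. 0 \<le> s \<Longrightarrow> s \<le> t \<Longrightarrow> F t \<le> F s"
    and bd: "\<And>N. (\<Sum>k<N. F (real k)) \<le> B"
  shows "(\<lambda>n::int. F \<bar>x + of_int n\<bar>) summable_on UNIV"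
    and "infsum (\<lambda>n::int. F \<bar>x + of_int n\<bar>) UNIV \<le> 2 * B"
proof -
  define n0 where "n0 = \<lceil>-x\<rceil>"
  have n0a: "-x \<le> of_int n0" and n0b: "of_int n0 - 1 < -x"
    unfolding n0_def by linarith+
  have half: "(\<Sum>n\<in>A. F \<bar>x + of_int n\<bar>) \<le> B"
    if "finite A" and k: "inj_on k A" and kb: "\<And>n. n \<in> A \<Longrightarrow> real (k n) \<le> \<bar>x + of_int n\<bar>" for A k
  proof -
    have "(\<Sum>n\<in>A. F \<bar>x + of_int n\<bar>) \<le> (\<Sum>n\<in>A. F (real (k n)))"
      by (intro sum_mono mono kb) auto
    also have "\<dots> = (\<Sum>m\<in>k ` A. F (real m))"
      using sum.reindex[OF k, of "\<lambda>m. F (real m)"] by simp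
    also obtain N where "k ` A \<subseteq> {..<N}" using finite_nat_bounded[of "k ` A"] \<open>finite A\<close> by blast
    hence "(\<Sum>m\<in>k ` A. F (real m)) \<le> (\<Sum>m<N. F (real m))"
      by (intro sum_mono2) (auto intro: nn)
    also have "\<dots> \<le> B" by (rule bd)
    finally show ?thesis .
  qed
  have fin: "(\<Sum>n\<in>A. F \<bar>x + of_int n\<bar>) \<le> 2 * B" if "finite A" for A :: "int set"
  proof -
    define A1 where "A1 = {n\<in>A. n0 \<le> n}"
    define A2 where "A2 = {n\<in>A. n < n0}"
    have "A = A1 \<union> A2" "A1 \<inter> A2 = {}" unfolding A1_def A2_def by auto
    hence "(\<Sum>n\<in>A. F \<bar>x + of_int n\<bar>) = (\<Sum>n\<in>A1. F \<bar>x + of_int n\<bar>) + (\<Sum>n\<in>A2. F \<bar>x + of_int n\<bar>)"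
      using that by (metis finite_Un sum.union_disjoint)
    also have "(\<Sum>n\<in>A1. F \<bar>x + of_int n\<bar>) \<le> B"
    proof (rule half[where k = "\<lambda>n. nat (n - n0)"])
      show "finite A1" using that unfolding A1_def by simp
      show "inj_on (\<lambda>n. nat (n - n0)) A1" unfolding A1_def inj_on_def by auto
      fix n assume "n \<in> A1" thus "real (nat (n - n0)) \<le> \<bar>x + of_int n\<bar>"
        unfolding A1_def using n0a by auto
    qed
    also have "(\<Sum>n\<in>A2. F \<bar>x + of_int n\<bar>) \<le> B"
    proof (rule half[where k = "\<lambda>n. nat (n0 - 1 - n)"])
      show "finite A2" using that unfolding A2_def by simp
      show "inj_on (\<lambda>n. nat (n0 - 1 - n)) A2" unfolding A2_def inj_on_def by auto
      fix n assume "n \<in> A2" thus "real (nat (n0 - 1 - n)) \<le> \<bar>x + of_int n\<bar>"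
        unfolding A2_def using n0b by auto
    qed
    finally show ?thesis by simp
  qed
  show sm: "(\<lambda>n::int. F \<bar>x + of_int n\<bar>) summable_on UNIV"
    by (rule nonneg_bdd_above_summable_on) (auto intro!: nn bdd_aboveI2[where M="2*B"] fin)
  show "infsum (\<lambda>n::int. F \<bar>x + of_int n\<bar>) UNIV \<le> 2 * B"
    by (rule infsum_le_finite_sums[OF sm]) (rule fin)
qed

lemma telescope_ineq:
  fixes v :: real assumes v: "0 < v"
  shows "(v + 1) powr (-3/2) \<le> 2 * v powr (-1/2) - 2 * (v + 1) powr (-1/2)"
proof -
  define a where "a = sqrt v"
  define b where "b = sqrt (v + 1)"
  have a: "0 < a" "a^2 = v" unfolding a_def using v by auto
  have b: "0 < b" "b^2 = v + 1" unfolding b_def using v by auto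
  have ab: "a < b" unfolding a_def b_def by simp
  have e1: "(v + 1) powr (-3/2) = 1 / b^3"
  proof -
    have "(v + 1) powr (-3/2) = inverse ((v+1) powr (1 + 1/2))"
      by (subst powr_minus[symmetric]) simp
    also have "(v+1) powr (1 + 1/2) = (v+1) powr 1 * (v+1) powr (1/2)"
      by (rule powr_add)
    also have "\<dots> = (v+1) * sqrt (v+1)"
      using v by (simp add: powr_half_sqrt)
    finally show ?thesis using b unfolding b_def by (simp add: power3_eq_cube field_simps)
  qed
  have e2: "v powr (-1/2) = 1 / a" unfolding a_def using v
    by (simp add: powr_minus_divide powr_half_sqrt)
  have e3: "(v + 1) powr (-1/2) = 1 / b" unfolding b_def using v
    by (simp add: powr_minus_divide powr_half_sqrt)
  have key: "a \<le> 2 * b^2 * (b - a)"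
  proof -
    have "(b - a) * (b + a) = 1" using a b by (simp add: algebra_simps power2_eq_square)
    moreover have "b * (b - a) \<ge> 0" using ab b by simp
    hence "(b + a) * (b * (b - a)) \<le> (2 * b) * (b * (b - a))"
      by (intro mult_right_mono) (use ab in auto)
    hence h1: "2 * b^2 * (b - a) \<ge> (b + a) * b * (b - a)"
      by (simp add: power2_eq_square algebra_simps)
    have h2: "(b + a) * b * (b - a) = b"
      using \<open>(b - a) * (b + a) = 1\<close> by (simp add: algebra_simps)
    show ?thesis using h1 h2 ab by linarith
  qed
  have "1 / b^3 \<le> 2 / a - 2 / b"
  proof -
    have "2 / a - 2 / b - 1 / b^3 = (2 * b^2 * (b - a) - a) / (a * b^3)"
      using a(1) b(1) by (simp add: field_simps power2_eq_square power3_eq_cube)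
    also have "\<dots> \<ge> 0" using key a(1) b(1) by (intro divide_nonneg_pos) auto
    finally show ?thesis by simp
  qed
  thus ?thesis using e1 e2 e3 by simp
qed

lemma nat_sum_bound:
  fixes Y :: real assumes Y: "0 < Y"
  shows "(\<Sum>k<N. (Y + real k) powr (-3/2)) \<le> Y powr (-3/2) + 2 * Y powr (-1/2)"
proof -
  have "(\<Sum>k<Suc M. (Y + real k) powr (-3/2)) \<le> Y powr (-3/2) + 2 * Y powr (-1/2) - 2 * (Y + real M) powr (-1/2)" for M
  proof (induction M)
    case 0 thus ?case by simp
  next
    case (Suc M)
    have "(\<Sum>k<Suc (Suc M). (Y + real k) powr (-3/2)) = (\<Sum>k<Suc M. (Y + real k) powr (-3/2)) + (Y + real M + 1) powr (-3/2)"
      by (simp add: add_ac)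
    also have "\<dots> \<le> Y powr (-3/2) + 2 * Y powr (-1/2) - 2 * (Y + real M) powr (-1/2) + (2 * (Y + real M) powr (-1/2) - 2 * (Y + real M + 1) powr (-1/2))"
      using Suc telescope_ineq[of "Y + real M"] Y by (intro add_mono) auto
    finally show ?case by (simp add: add_ac)
  qed
  moreover have "0 \<le> (Y + real M) powr (-1/2)" for M by simp
  ultimately have *: "(\<Sum>k<Suc M. (Y + real k) powr (-3/2)) \<le> Y powr (-3/2) + 2 * Y powr (-1/2)" for M
    by (smt (verit))
  show ?thesis
  proof (cases N)
    case 0 thus ?thesis using Y by simp
  next
    case (Suc M) thus ?thesis using *[of M] by simp
  qed
qed

lemma sq_powr: fixes x a :: real assumes "0 < x" shows "(x^2) powr a = x powr (2 * a)"
proof -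
  have "x^2 = x powr 2" using assms by (simp add: powr_realpow)
  hence "(x^2) powr a = (x powr 2) powr a" by simp
  also have "\<dots> = x powr (2 * a)" by (rule powr_powr)
  finally show ?thesis .
qed

lemma Gamma_le_one: fixes x :: real assumes "1 \<le> x" "x \<le> 2" shows "Gamma x \<le> 1"
proof -
  have "(ln \<circ> Gamma) ((1 - (x - 1)) *\<^sub>R 1 + (x - 1) *\<^sub>R 2) \<le> (1 - (x - 1)) * (ln \<circ> Gamma) 1 + (x - 1) * (ln \<circ> Gamma) 2"
    by (rule convex_onD[OF log_convex_Gamma_real]) (use assms in auto)
  moreover have "Gamma (2::real) = 1" using Gamma_fact[of 1, where 'a=real] by simp
  moreover have "(1 - (x - 1)) *\<^sub>R 1 + (x - 1) *\<^sub>R 2 = x" by (simp add: algebra_simps)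
  ultimately have "ln (Gamma x) \<le> 0" by simp
  moreover have "Gamma x > 0" using assms by simp
  ultimately show ?thesis by simp
qed

lemma eps_le_rGamma: fixes e :: real assumes "0 < e" "e \<le> 1" shows "e \<le> 1 / Gamma e"
proof -
  have "Gamma (e + 1) = e * Gamma e" using assms by (intro Gamma_plus1) (auto dest: nonpos_Ints_nonpos)
  moreover have "Gamma (e + 1) \<le> 1" using assms by (intro Gamma_le_one) auto
  moreover have "Gamma e > 0" using assms by simp
  ultimately show ?thesis by (simp add: field_simps)
qed

lemma P1:
  fixes w :: complex assumes Y: "0 < \<bar>Im w\<bar>"
  shows "cmod (1 / w^2) \<le> 2 * \<bar>Im w\<bar> powr (-1/2) * (\<bar>Im w\<bar> + \<bar>Re w\<bar>) powr (-3/2)"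
proof -
  define Y where "Y = \<bar>Im w\<bar>"
  define v where "v = \<bar>Im w\<bar> + \<bar>Re w\<bar>"
  have v: "0 < v" "Y \<le> v" unfolding v_def Y_def using Y by auto
  have sq: "(a+b)^2 \<le> 2*(a^2+b^2)" for a b :: real
  proof -
    have "(a+b)^2 = a^2+b^2 + 2*a*b" "(a-b)^2 = a^2+b^2-2*a*b" by (simp_all add: power2_eq_square algebra_simps)
    moreover have "0 \<le> (a-b)^2" by simp
    ultimately show ?thesis by (smt (verit))
  qed
  have "v^2 \<le> 2 * (cmod w)^2" unfolding v_def cmod_power2
    using sq[of "\<bar>Im w\<bar>" "\<bar>Re w\<bar>"] by (simp add: add_ac)
  have cm: "(cmod w)^2 > 0" using Y by (simp add: cmod_power2 add_nonneg_pos)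
  have "cmod (1 / w^2) = 1 / (cmod w)^2" by (simp add: norm_divide norm_power)
  also have "\<dots> \<le> 1 / (v^2 / 2)" using \<open>v^2 \<le> 2 * (cmod w)^2\<close> cm v
    by (intro divide_left_mono) auto
  also have "1 / (v^2 / 2) = 2 * (v powr (-1/2) * v powr (-3/2))"
  proof -
    have "v powr (-1/2) * v powr (-3/2) = v powr (-2)" by (simp add: powr_add[symmetric])
    also have "\<dots> = 1 / v^2" using v by (simp add: powr_minus_divide powr_realpow)
    finally show ?thesis by simp
  qed
  also have "\<dots> \<le> 2 * (Y powr (-1/2) * v powr (-3/2))"
    using v Y unfolding Y_def by (intro mult_left_mono mult_right_mono powr_mono2') auto
  finally show ?thesis unfolding Y_def v_def by (simp add: mult_ac)
qed

lemma ln_le_quarter: fixes t :: real assumes "1 \<le> t" shows "ln t \<le> 4 * t powr (1/4)"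
proof -
  have "ln t = 4 * ln (t powr (1/4))" using assms by (simp add: ln_powr)
  also have "ln (t powr (1/4)) \<le> t powr (1/4) - 1" using assms by (intro ln_le_minus_one) simp
  finally show ?thesis by simp
qed

lemma P3:
  fixes Y R v :: real
  assumes Y: "0 < Y" and R: "Y^2 \<le> R" and v: "0 < v" and vR: "v^2 \<le> 2 * R"
  shows "ln (R / Y^2) / R \<le> 8 * Y powr (-1/2) * v powr (-3/2)"
proof -
  have Rp: "0 < R" using Y R by (smt (verit) zero_less_power)
  define t where "t = R / Y^2"
  have t1: "1 \<le> t" unfolding t_def using R Y by simp
  have "ln t / R \<le> 4 * t powr (1/4) / R" using ln_le_quarter[OF t1] Rp by (simp add: divide_right_mono)
  also have "4 * t powr (1/4) / R = 4 * R powr (-3/4) * Y powr (-1/2)"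
  proof -
    have "t powr (1/4) = R powr (1/4) * Y powr (-1/2)"
      unfolding t_def using Y Rp by (simp add: powr_divide sq_powr powr_minus_divide)
    moreover have "R powr (-3/4) = R powr (1/4) / R"
    proof -
      have "R powr (1/4) / R = R powr (1/4) / R powr 1" using Rp by simp
      also have "\<dots> = R powr (1/4 - 1)" by (rule powr_diff[symmetric])
      finally show ?thesis by simp
    qed
    ultimately show ?thesis using Rp by (simp only:) (simp add: field_simps)
  qed
  finally have A: "ln t / R \<le> 4 * R powr (-3/4) * Y powr (-1/2)" .
  have "R powr (-3/4) \<le> (v^2 / 2) powr (-3/4)"
    using vR v by (intro powr_mono2') auto
  also have "(v^2 / 2) powr (-3/4) = 2 powr (3/4) * v powr (-3/2)"
    using v by (simp add: powr_divide sq_powr powr_minus_divide)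
  also have "2 powr (3/4) * v powr (-3/2) \<le> 2 powr 1 * v powr (-3/2)"
    by (intro mult_right_mono powr_mono) auto
  finally have B: "R powr (-3/4) \<le> 2 * v powr (-3/2)" by simp
  have "4 * R powr (-3/4) * Y powr (-1/2) \<le> 4 * (2 * v powr (-3/2)) * Y powr (-1/2)"
    by (intro mult_right_mono mult_left_mono B) auto
  with A show ?thesis unfolding t_def by (simp add: mult_ac)
qed


lemma P2:
  fixes w :: complex and e :: real assumes Y: "0 < \<bar>Im w\<bar>" and e: "0 < e"
  shows "cmod (1 / (w^2 * of_real (cmod w powr (2*e))) - of_real (\<bar>Im w\<bar> powr (-2*e)) * (1/w^2))
     \<le> e * \<bar>Im w\<bar> powr (-2*e) * (8 * \<bar>Im w\<bar> powr (-1/2) * (\<bar>Im w\<bar> + \<bar>Re w\<bar>) powr (-3/2))"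
proof -
  define Y where "Y = \<bar>Im w\<bar>"
  define r where "r = cmod w"
  define R where "R = r^2"
  define v where "v = \<bar>Im w\<bar> + \<bar>Re w\<bar>"
  have Yp: "0 < Y" using Y unfolding Y_def .
  have w0: "w \<noteq> 0" using Y by auto
  have rp: "0 < r" unfolding r_def using w0 by simp
  have RY: "Y^2 \<le> R" unfolding R_def r_def Y_def cmod_power2 by simp
  have Yr: "Y \<le> r" unfolding r_def Y_def by (rule abs_Im_le_cmod)
  have vp: "0 < v" unfolding v_def using Y by auto
  have sq: "(a+b)^2 \<le> 2*(a^2+b^2)" for a b :: real
  proof -
    have "(a+b)^2 = a^2+b^2 + 2*a*b" "(a-b)^2 = a^2+b^2-2*a*b" by (simp_all add: power2_eq_square algebra_simps)
    moreover have "0 \<le> (a-b)^2" by simp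
    ultimately show ?thesis by (smt (verit))
  qed
  have vR: "v^2 \<le> 2 * R" unfolding v_def R_def r_def cmod_power2
    using sq[of "\<bar>Im w\<bar>" "\<bar>Re w\<bar>"] by (simp add: add_ac)
  have Rp: "0 < R" unfolding R_def using rp by simp
  have eq: "1 / (w^2 * of_real (r powr (2*e))) - of_real (Y powr (-2*e)) * (1/w^2)
      = (1/w^2) * of_real (r powr (-2*e) - Y powr (-2*e))"
    using w0 rp by (simp add: powr_minus_divide field_simps)
  have "r powr (-2*e) \<le> Y powr (-2*e)" using Yp Yr e by (intro powr_mono2') auto
  hence nm: "cmod (1 / (w^2 * of_real (r powr (2*e))) - of_real (Y powr (-2*e)) * (1/w^2))
      = (Y powr (-2*e) - r powr (-2*e)) / R"
  proof -
    have "cmod (1 / (w^2 * of_real (r powr (2*e))) - of_real (Y powr (-2*e)) * (1/w^2))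
        = cmod ((1/w^2) * of_real (r powr (-2*e) - Y powr (-2*e)))" by (simp only: eq)
    also have "\<dots> = (1/R) * \<bar>r powr (-2*e) - Y powr (-2*e)\<bar>"
      unfolding R_def r_def by (simp add: norm_mult norm_divide norm_power of_real_diff[symmetric] del: of_real_diff)
    finally show ?thesis using \<open>r powr (-2*e) \<le> Y powr (-2*e)\<close> by simp
  qed
  define t where "t = R / Y^2"
  have t1: "1 \<le> t" unfolding t_def using RY Yp by simp
  have "r powr (-2*e) = R powr (-e)" unfolding R_def using rp by (simp add: sq_powr)
  also have "R = Y^2 * t" unfolding t_def using Yp by simp
  also have "(Y^2 * t) powr (-e) = (Y^2) powr (-e) * t powr (-e)" using Yp t1 by (simp add: powr_mult)
  also have "(Y^2) powr (-e) = Y powr (-2*e)" using Yp by (simp add: sq_powr)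
  finally have rr: "r powr (-2*e) = Y powr (-2*e) * t powr (-e)" .
  have "t powr (-e) = exp (- (e * ln t))" using t1 by (simp add: powr_def)
  also have "\<dots> \<ge> 1 - e * ln t" using exp_ge_add_one_self[of "- (e * ln t)"] by simp
  finally have "1 - t powr (-e) \<le> e * ln t" by simp
  hence "Y powr (-2*e) * (1 - t powr (-e)) \<le> Y powr (-2*e) * (e * ln t)"
    by (intro mult_left_mono) auto
  moreover have "Y powr (-2*e) - r powr (-2*e) = Y powr (-2*e) * (1 - t powr (-e))"
    unfolding rr by (simp add: algebra_simps)
  ultimately have "Y powr (-2*e) - r powr (-2*e) \<le> Y powr (-2*e) * (e * ln t)" by simp
  hence "(Y powr (-2*e) - r powr (-2*e)) / R \<le> Y powr (-2*e) * e * (ln t / R)"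
    using Rp by (simp add: divide_right_mono mult_ac)
  also have "ln t / R \<le> 8 * Y powr (-1/2) * v powr (-3/2)"
    unfolding t_def by (rule P3[OF Yp RY vp vR])
  hence "Y powr (-2*e) * e * (ln t / R) \<le> Y powr (-2*e) * e * (8 * Y powr (-1/2) * v powr (-3/2))"
    using e by (intro mult_left_mono) auto
  finally show ?thesis using nm unfolding Y_def r_def v_def by (simp add: mult_ac)
qed

lemma sin_bound:
  fixes z :: complex and y0 :: real
  assumes y0: "0 < y0" and Y: "y0 \<le> \<bar>Im z\<bar>"
  shows "cmod ((of_real pi)^2 / (sin (of_real pi * z))^2)
     \<le> 4 * pi^2 / (1 - exp (-2*pi*y0))^2 * exp (-2*pi*\<bar>Im z\<bar>)"
proof -
  define c where "c = Im (of_real pi * z)"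
  define b where "b = pi * \<bar>Im z\<bar>"
  have cb: "\<bar>c\<bar> = b" unfolding c_def b_def by (simp add: abs_mult)
  define \<kappa> where "\<kappa> = 1 - exp (-2*pi*y0)"
  have \<kappa>: "0 < \<kappa>" unfolding \<kappa>_def using y0 by simp
  have e1: "exp (2*c) + inverse (exp (2*c)) - 2 = (exp c - exp (-c))^2" for c :: real
    by (simp add: power2_eq_square exp_minus field_simps exp_add[symmetric])
  have e2: "(exp c - exp (-c))^2 = (exp b - exp (-b))^2"
    using cb by (cases "c \<ge> 0") (auto simp: power2_eq_square algebra_simps)
  have "exp b - exp (-b) = exp b * (1 - exp (-2*b))"
    by (simp add: algebra_simps exp_add[symmetric])
  also have "\<dots> \<ge> exp b * \<kappa>"
    unfolding \<kappa>_def b_def using Y by (intro mult_left_mono) auto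
  finally have e3: "exp b * \<kappa> \<le> exp b - exp (-b)" .
  have "(norm (sin (of_real pi * z)))^2 = (exp (2*c) + inverse (exp (2*c)) - 2 * cos (2 * Re (of_real pi * z))) / 4"
    unfolding c_def by (rule norm_sin_squared)
  also have "\<dots> \<ge> (exp (2*c) + inverse (exp (2*c)) - 2) / 4" by simp
  finally have "(norm (sin (of_real pi * z)))^2 \<ge> (exp b - exp (-b))^2 / 4"
    using e1 e2 by simp
  moreover have "(exp b - exp (-b))^2 \<ge> (exp b * \<kappa>)^2"
    using e3 \<kappa> by (intro power_mono) auto
  ultimately have ns: "(norm (sin (of_real pi * z)))^2 \<ge> (exp b * \<kappa>)^2 / 4" by simp
  have pos: "0 < (exp b * \<kappa>)^2 / 4" using \<kappa> by simp
  have "cmod ((of_real pi)^2 / (sin (of_real pi * z))^2) = pi^2 / (norm (sin (of_real pi * z)))^2"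
    by (simp add: norm_divide norm_power)
  also have "\<dots> \<le> pi^2 / ((exp b * \<kappa>)^2 / 4)"
  proof -
    have "0 < (norm (sin (of_real pi * z)))^2" using ns pos by linarith
    thus ?thesis using ns pos by (intro divide_left_mono) auto
  qed
  also have "\<dots> = 4 * pi^2 / \<kappa>^2 * exp (-2*b)"
    using \<kappa> by (simp add: field_simps power2_eq_square exp_add[symmetric])
  finally show ?thesis unfolding \<kappa>_def b_def by (simp add: mult_ac)
qed

lemma nat_part:
  fixes z :: complex and h :: "nat \<Rightarrow> int" and c :: "int \<Rightarrow> complex"
  assumes sm: "c summable_on UNIV" and inj: "inj h" and z: "z \<noteq> 0"
    and ch: "\<And>k. c (h k) = inverse ((z + of_nat k)^2)"
  shows "(c has_sum Polygamma 1 z) (range h)"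
proof -
  have "c summable_on range h" by (rule summable_on_subset_banach[OF sm]) auto
  hence sm2: "(c \<circ> h) summable_on UNIV" using summable_on_reindex[OF inj] by blast
  have "(c \<circ> h) sums infsum (c \<circ> h) UNIV"
    by (rule has_sum_imp_sums) (rule has_sum_infsum[OF sm2])
  moreover have "(c \<circ> h) sums Polygamma 1 z"
    using Polygamma_LIMSEQ[OF z, of 1] by (simp add: o_def ch power2_eq_square)
  ultimately have "infsum (c \<circ> h) UNIV = Polygamma 1 z" by (rule sums_unique2)
  hence "((c \<circ> h) has_sum Polygamma 1 z) UNIV" using has_sum_infsum[OF sm2] by simp
  thus ?thesis using has_sum_reindex[OF inj] by blast
qed

lemma c_has_sum:
  fixes z :: complex assumes Im: "Im z \<noteq> 0"
    and sm: "(\<lambda>n::int. 1/(z + of_int n)^2) summable_on UNIV"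
  shows "((\<lambda>n::int. 1/(z + of_int n)^2) has_sum (Polygamma 1 z + Polygamma 1 (1 - z))) UNIV"
proof -
  define c where "c = (\<lambda>n::int. 1/(z + of_int n)^2)"
  have z0: "z \<noteq> 0" "1 - z \<noteq> 0" using Im by auto
  have A: "(c has_sum Polygamma 1 z) (range (\<lambda>k::nat. int k))"
    by (rule nat_part[OF sm[folded c_def] _ z0(1)]) (auto simp: c_def inj_def field_simps)
  have B: "(c has_sum Polygamma 1 (1 - z)) (range (\<lambda>k::nat. - int k - 1))"
  proof (rule nat_part[OF sm[folded c_def] _ z0(2)])
    show "inj (\<lambda>k::nat. - int k - 1)" by (auto simp: inj_def)
    fix k :: nat
    have "(z + of_int (- int k - 1))^2 = (1 - z + of_nat k)^2" by (simp add: power2_eq_square algebra_simps)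
    thus "c (- int k - 1) = inverse ((1 - z + of_nat k)^2)" unfolding c_def by (simp add: divide_inverse)
  qed
  have "(c has_sum (Polygamma 1 z + Polygamma 1 (1 - z))) (range (\<lambda>k::nat. int k) \<union> range (\<lambda>k::nat. - int k - 1))"
    by (rule has_sum_Un_disjoint[OF A B]) auto
  moreover have "range (\<lambda>k::nat. int k) \<union> range (\<lambda>k::nat. - int k - 1) = UNIV"
  proof (rule set_eqI, rule iffI)
    fix n :: int
    show "n \<in> range (\<lambda>k::nat. int k) \<union> range (\<lambda>k::nat. - int k - 1)"
    proof (cases "n \<ge> 0")
      case True hence "n = int (nat n)" by simp
      thus ?thesis by blast
    next
      case False hence "n = - int (nat (- n - 1)) - 1" by simp
      thus ?thesis by blast
    qed
  qed auto
  ultimately show ?thesis unfolding c_def by simp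
qed

theorem lemma1p6:
  fixes y0 :: real
  assumes "y0 > 0"
  shows "\<exists>C>0. \<forall>z::complex. \<forall>\<epsilon>::real.
           \<bar>Im z\<bar> \<ge> y0 \<longrightarrow> 0 < \<epsilon> \<longrightarrow> \<epsilon> \<le> 1 \<longrightarrow>
           cmod (S_eps \<epsilon> z) \<le> C * (1 / (Gamma \<epsilon> * \<bar>Im z\<bar> powr (1 + 2 * \<epsilon>)) + exp (- 2 * pi * \<bar>Im z\<bar>))"
proof -
  have y0: "0 < y0" using assms .
  define M where "M = 4 * pi^2 / (1 - exp (-2*pi*y0))^2"
  define K1 where "K1 = max 1 (1/y0^2) * M"
  define K2 where "K2 = 16 * (1/y0 + 2)"
  define C where "C = max K1 K2 + 1"
  have M0: "0 \<le> M" unfolding M_def by simp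
  have K1: "0 \<le> K1" unfolding K1_def using M0 by simp
  have K2: "0 \<le> K2" unfolding K2_def using y0 by simp
  show ?thesis
  proof (intro exI[of _ C] conjI allI impI)
    show "C > 0" unfolding C_def using K1 by simp
    fix z :: complex and \<epsilon> :: real
    assume Yge: "y0 \<le> \<bar>Im z\<bar>" and e0: "0 < \<epsilon>" and e1: "\<epsilon> \<le> 1"
    define Y where "Y = \<bar>Im z\<bar>"
    define x where "x = Re z"
    have Yp: "0 < Y" unfolding Y_def using Yge y0 by simp
    have Y0: "y0 \<le> Y" unfolding Y_def using Yge .
    define F where "F = (\<lambda>s::real. (Y + s) powr (-3/2))"
    define B where "B = Y powr (-3/2) + 2 * Y powr (-1/2)"
    have Fnn: "\<And>s. 0 \<le> s \<Longrightarrow> 0 \<le> F s" unfolding F_def by simp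
    have Fmono: "\<And>s t. 0 \<le> s \<Longrightarrow> s \<le> t \<Longrightarrow> F t \<le> F s"
      unfolding F_def using Yp by (intro powr_mono2') auto
    have Fbd: "\<And>N. (\<Sum>k<N. F (real k)) \<le> B"
      unfolding F_def B_def by (rule nat_sum_bound[OF Yp])
    note FI = int_sum_bound[of F, OF Fnn Fmono Fbd, of x]
    have Fsum: "(\<lambda>n::int. F \<bar>x + of_int n\<bar>) summable_on UNIV" by (rule FI(1))
    have Finf: "infsum (\<lambda>n::int. F \<bar>x + of_int n\<bar>) UNIV \<le> 2 * B" by (rule FI(2))
    define c where "c = (\<lambda>n::int. 1/(z + of_int n)^2)"
    define a where "a = (\<lambda>n::int. 1 / ((z + of_int n)^2 * of_real (cmod (z + of_int n) powr (2 * \<epsilon>))))"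
    define b where "b = (\<lambda>n. a n - of_real (Y powr (-2*\<epsilon>)) * c n)"
    define m where "m = (\<lambda>n::int. (\<epsilon> * Y powr (-2*\<epsilon>) * 8 * Y powr (-1/2)) * F \<bar>x + of_int n\<bar>)"
    have ImRe: "Im (z + of_int n) = Im z" "Re (z + of_int n) = x + of_int n" for n :: int
      unfolding x_def by simp_all
    have cb: "cmod (c n) \<le> 2 * Y powr (-1/2) * F \<bar>x + of_int n\<bar>" for n
      using P1[of "z + of_int n"] Yp unfolding c_def F_def Y_def ImRe by simp
    have bb: "cmod (b n) \<le> m n" for n
      using P2[of "z + of_int n" \<epsilon>] Yp e0 unfolding b_def a_def c_def m_def F_def Y_def ImRe
      by (simp add: mult_ac)
    have c_abs: "(\<lambda>n. cmod (c n)) summable_on UNIV"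
      by (rule summable_on_comparison_test[OF summable_on_cmult_right[OF Fsum, of "2 * Y powr (-1/2)"]])
         (use cb in auto)
    have c_sum: "c summable_on UNIV" by (rule abs_summable_summable[OF c_abs])
    have Imz: "Im z \<noteq> 0" using Yp unfolding Y_def by simp
    have zI: "z \<notin> \<int>"
    proof
      assume "z \<in> \<int>" then obtain k where "z = of_int k" by (auto elim: Ints_cases)
      thus False using Imz by simp
    qed
    define g0 where "g0 = (of_real pi)^2 / (sin (of_real pi * z))^2"
    have c_has: "(c has_sum g0) UNIV"
      using c_has_sum[OF Imz c_sum[unfolded c_def]] trigamma_refl[OF zI] unfolding c_def g0_def by simp
    have m_sum: "m summable_on UNIV" unfolding m_def by (rule summable_on_cmult_right[OF Fsum])
    have m_inf: "infsum m UNIV = (\<epsilon> * Y powr (-2*\<epsilon>) * 8 * Y powr (-1/2)) * infsum (\<lambda>n::int. F \<bar>x + of_int n\<bar>) UNIV"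
      unfolding m_def by (rule infsum_cmult_right) (use Fsum in auto)
    have b_abs: "(\<lambda>n. cmod (b n)) summable_on UNIV"
      by (rule summable_on_comparison_test[OF m_sum]) (use bb in auto)
    have b_sum: "b summable_on UNIV" by (rule abs_summable_summable[OF b_abs])
    define T where "T = infsum b UNIV"
    have b_has: "(b has_sum T) UNIV" unfolding T_def using b_sum by simp
    have a_eq: "a n = of_real (Y powr (-2*\<epsilon>)) * c n + b n" for n unfolding b_def by simp
    have "((\<lambda>n. of_real (Y powr (-2*\<epsilon>)) * c n + b n) has_sum (of_real (Y powr (-2*\<epsilon>)) * g0 + T)) UNIV"
      by (intro has_sum_add has_sum_cmult_right c_has b_has)
    moreover have "a = (\<lambda>n. of_real (Y powr (-2*\<epsilon>)) * c n + b n)" using a_eq by (intro ext)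
    ultimately have a_has: "(a has_sum (of_real (Y powr (-2*\<epsilon>)) * g0 + T)) UNIV" by simp
    have S_eq: "S_eps \<epsilon> z = of_real (Y powr (-2*\<epsilon>)) * g0 + T"
      unfolding S_eps_def using infsumI[OF a_has] unfolding a_def by simp
    have nT: "norm T \<le> infsum m UNIV"
      by (rule norm_infsum_le[OF b_has has_sum_infsum[OF m_sum]]) (use bb in auto)
    have "infsum m UNIV \<le> (\<epsilon> * Y powr (-2*\<epsilon>) * 8 * Y powr (-1/2)) * (2 * B)"
      unfolding m_inf using Finf e0 by (intro mult_left_mono) auto
    also have "(\<epsilon> * Y powr (-2*\<epsilon>) * 8 * Y powr (-1/2)) * (2 * B)
        = 16 * (\<epsilon> * Y powr (-2*\<epsilon>)) * (1 / Y^2 + 2 / Y)"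
    proof -
      have "Y powr (-1/2) * Y powr (-3/2) = 1 / Y^2"
        using Yp by (simp add: powr_add[symmetric] powr_minus_divide powr_realpow)
      moreover have "Y powr (-1/2) * Y powr (-1/2) = 1 / Y"
        using Yp by (simp add: powr_add[symmetric] powr_minus_divide)
      ultimately show ?thesis unfolding B_def by (simp add: algebra_simps)
    qed
    also have "1 / Y^2 + 2 / Y \<le> (1/y0 + 2) / Y"
    proof -
      have "1 / Y^2 = (1/Y) / Y" by (simp add: power2_eq_square)
      also have "\<dots> \<le> (1/y0) / Y" using Yp Y0 y0 by (intro divide_right_mono) (auto simp: field_simps)
      finally show ?thesis by (simp add: add_divide_distrib)
    qed
    hence "16 * (\<epsilon> * Y powr (-2*\<epsilon>)) * (1 / Y^2 + 2 / Y) \<le> 16 * (\<epsilon> * Y powr (-2*\<epsilon>)) * ((1/y0 + 2) / Y)"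
      using e0 by (intro mult_left_mono) auto
    also have "16 * (\<epsilon> * Y powr (-2*\<epsilon>)) * ((1/y0 + 2) / Y) = K2 * (\<epsilon> / Y powr (1 + 2*\<epsilon>))"
    proof -
      have "Y powr (-2*\<epsilon>) / Y = 1 / Y powr (1 + 2*\<epsilon>)"
        using Yp by (simp add: powr_add powr_minus_divide)
      moreover have "16 * (\<epsilon> * Y powr (-2*\<epsilon>)) * ((1/y0 + 2) / Y) = K2 * \<epsilon> * (Y powr (-2*\<epsilon>) / Y)"
        unfolding K2_def by (simp add: field_simps)
      ultimately show ?thesis by simp
    qed
    also have "\<epsilon> / Y powr (1 + 2*\<epsilon>) \<le> (1 / Gamma \<epsilon>) / Y powr (1 + 2*\<epsilon>)"
      using eps_le_rGamma[OF e0 e1] Yp by (intro divide_right_mono) auto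
    finally have T_bd: "norm T \<le> K2 * (1 / (Gamma \<epsilon> * Y powr (1 + 2 * \<epsilon>)))"
      using nT K2 by (simp add: mult_left_mono)
    have Ypow: "Y powr (-2*\<epsilon>) \<le> max 1 (1/y0^2)"
    proof (cases "1 \<le> Y")
      case True
      hence "Y powr (-2*\<epsilon>) \<le> 1 powr (-2*\<epsilon>)" using e0 by (intro powr_mono2') auto
      thus ?thesis by simp
    next
      case False
      hence "Y powr (-2*\<epsilon>) \<le> Y powr (-2)" using e1 Yp by (intro powr_mono') auto
      also have "\<dots> = 1 / Y^2" using Yp by (simp add: powr_minus_divide powr_realpow)
      also have "\<dots> \<le> 1 / y0^2" using Y0 y0 by (intro divide_left_mono power_mono) auto
      finally show ?thesis by simp
    qed
    have g0_bd: "norm g0 \<le> M * exp (-2*pi*Y)"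
      unfolding g0_def M_def Y_def by (rule sin_bound[OF y0 Yge])
    have "norm (of_real (Y powr (-2*\<epsilon>)) * g0) = Y powr (-2*\<epsilon>) * norm g0" by (simp add: norm_mult)
    also have "\<dots> \<le> max 1 (1/y0^2) * (M * exp (-2*pi*Y))"
      using Ypow g0_bd by (intro mult_mono) auto
    also have "\<dots> = K1 * exp (-2*pi*Y)" unfolding K1_def by simp
    finally have G_bd: "norm (of_real (Y powr (-2*\<epsilon>)) * g0) \<le> K1 * exp (-2*pi*Y)" .
    define A where "A = 1 / (Gamma \<epsilon> * Y powr (1 + 2 * \<epsilon>))"
    define E where "E = exp (- 2 * pi * Y)"
    have A0: "0 \<le> A" unfolding A_def using e0 by simp
    have E0: "0 \<le> E" unfolding E_def by simp
    have "cmod (S_eps \<epsilon> z) \<le> norm (of_real (Y powr (-2*\<epsilon>)) * g0) + norm T"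
      unfolding S_eq by (rule norm_triangle_ineq)
    also have "\<dots> \<le> K1 * E + K2 * A" using G_bd T_bd unfolding A_def E_def by simp
    also have "\<dots> \<le> C * E + C * A" unfolding C_def using A0 E0 by (intro add_mono mult_right_mono) auto
    finally show "cmod (S_eps \<epsilon> z) \<le> C * (1 / (Gamma \<epsilon> * \<bar>Im z\<bar> powr (1 + 2 * \<epsilon>)) + exp (- 2 * pi * \<bar>Im z\<bar>))"
      unfolding A_def E_def Y_def by (simp add: algebra_simps)
  qed
qed

end
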